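(* Let $G=(V,E)$ be a finite connected graph with boundary $\partial G\subset V$, and let $\alpha\in\Pi(\partial G)$ be a boundary condition. Assume that the graph $G\cup\alpha$ is not a tree and contains at least two vertices. Then for all $p\in(0,1)$ and all $q\in(0,\infty)$ with $q\neq 1$, there exist families $(\varepsilon_e)_{e\in E}\in[0,1]^E$ and $(\varepsilon'_e)_{e\in E}\in[0,1]^E$, neither of which is identically $0$, such that \[\mathbb P^G_{(\min(p,p')+\varepsilon_e)_{e}}\ \preceq\ \phi^\alpha_{G,p,q}\ \preceq\ \mathbb P^G_{(\max(p,p')-\varepsilon'_e)_{e}}.\]
   Context: Configurations are $\omega\in\{0,1\}^E$; an edge $e$ is open if $\omega(e)=1$, closed otherwise; configurations are partially ordered coordinatewise. $\Pi(\partial G)$ denotes the set of partitions of $\partial G$; vertices in the same block of $\alpha$ are called wired. $G\cup\alpha$ is the (multi)graph obtained from $G$ by identifying wired vertices (this may create self-loops). $k(\omega,\alpha)$ is the number of connected components of the graph with vertex set $V$ and edge set the open edges of $\omega$, after identifying wired vertices. For $p\in[0,1]$, $q>0$, the FK (random cluster) measure is \[\phi^\alpha_{G,p,q}(\omega)=\frac1{Z}\Big(\prod_{e\in E}p^{\omega(e)}(1-p)^{1-\omega(e)}\Big)q^{k(\omega,\alpha)},\] $Z$ the normalizing constant. Set $p':=\frac{p}{p+q(1-p)}$. For $(p_e)_{e\in E}\in[0,1]^E$, $\mathbb P^G_{(p_e)}$ is the product measure on $\{0,1\}^E$ under which each edge $e$ is open independently with probability $p_e$. For measures $\mu,\mu'$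 on $\{0,1\}^E$, $\mu\preceq\mu'$ means $\mu(A)\le\mu'(A)$ for every increasing event $A$ (an event preserved by opening edges). *)

theory Defs
  imports Complex_Main "HOL-Library.Disjoint_Sets"
begin

definition simple_graph :: "'v set \<Rightarrow> 'v set set \<Rightarrow> bool" where
  "simple_graph V E \<longleftrightarrow> finite V \<and> E \<subseteq> {{u, v} | u v. u \<in> V \<and> v \<in> V \<and> u \<noteq> v}"

definition graph_connected :: "'v set \<Rightarrow> 'v set set \<Rightarrow> bool" where
  "graph_connected V E \<longleftrightarrow> (\<forall>u\<in>V. \<forall>v\<in>V. (u, v) \<in> {(x, y). {x, y} \<in> E}\<^sup>*)"

(* Multigraphs: vertex set W, edge set Ed, ends e = set of endpoints (singleton for a loop). *)
definition mg_connected :: "'w set \<Rightarrow> 'e set \<Rightarrow> ('e \<Rightarrow> 'w set) \<Rightarrow> bool" where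
  "mg_connected W Ed ends \<longleftrightarrow>
     (\<forall>x\<in>W. \<forall>y\<in>W. (x, y) \<in> {(a, b). \<exists>e\<in>Ed. ends e = {a, b}}\<^sup>*)"

(* A cycle: distinct vertices v_0..v_{n-1}, distinct edges e_0..e_{n-1} (n >= 1),
   e_i joining v_i and v_{i+1 mod n}.  (n = 1: loop, n = 2: double edge.) *)
definition mg_cycle :: "'w set \<Rightarrow> 'e set \<Rightarrow> ('e \<Rightarrow> 'w set) \<Rightarrow> 'w list \<Rightarrow> 'e list \<Rightarrow> bool" where
  "mg_cycle W Ed ends vs es \<longleftrightarrow>
     vs \<noteq> [] \<and> length es = length vs \<and> distinct vs \<and> distinct es \<and>
     set vs \<subseteq> W \<and> set es \<subseteq> Ed \<and>
     (\<forall>i<length vs. ends (es ! i) = {vs ! i, vs ! (Suc i mod length vs)})"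

definition mg_tree :: "'w set \<Rightarrow> 'e set \<Rightarrow> ('e \<Rightarrow> 'w set) \<Rightarrow> bool" where
  "mg_tree W Ed ends \<longleftrightarrow> mg_connected W Ed ends \<and> \<not> (\<exists>vs es. mg_cycle W Ed ends vs es)"

definition wired_rel :: "'v set \<Rightarrow> 'v set set \<Rightarrow> ('v \<times> 'v) set" where
  "wired_rel V \<alpha> = Id_on V \<union> (\<Union>B\<in>\<alpha>. B \<times> B)"

(* The graph G \<union> alpha: vertices = classes of wired vertices, edges = E *)
definition wired_vertices :: "'v set \<Rightarrow> 'v set set \<Rightarrow> 'v set set" where
  "wired_vertices V \<alpha> = V // wired_rel V \<alpha>"

definition wired_ends :: "'v set \<Rightarrow> 'v set set \<Rightarrow> 'v set \<Rightarrow> 'v set set" where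
  "wired_ends V \<alpha> e = (\<lambda>x. wired_rel V \<alpha> `` {x}) ` e"

definition configs :: "'v set set \<Rightarrow> ('v set \<Rightarrow> bool) set" where
  "configs E = {\<omega>. \<forall>e. e \<notin> E \<longrightarrow> \<not> \<omega> e}"

definition open_conn :: "'v set \<Rightarrow> 'v set set \<Rightarrow> 'v set set \<Rightarrow> ('v set \<Rightarrow> bool) \<Rightarrow> ('v \<times> 'v) set" where
  "open_conn V E \<alpha> \<omega> =
     (Id_on V \<union> {(u, v). {u, v} \<in> E \<and> \<omega> {u, v}} \<union> (\<Union>B\<in>\<alpha>. B \<times> B))\<^sup>+"

definition num_clusters :: "'v set \<Rightarrow> 'v set set \<Rightarrow> 'v set set \<Rightarrow> ('v set \<Rightarrow> bool) \<Rightarrow> nat" where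
  "num_clusters V E \<alpha> \<omega> = card (V // open_conn V E \<alpha> \<omega>)"

definition fk_weight :: "'v set \<Rightarrow> 'v set set \<Rightarrow> 'v set set \<Rightarrow> real \<Rightarrow> real \<Rightarrow> ('v set \<Rightarrow> bool) \<Rightarrow> real" where
  "fk_weight V E \<alpha> p q \<omega> =
     (\<Prod>e\<in>E. if \<omega> e then p else 1 - p) * q ^ num_clusters V E \<alpha> \<omega>"

definition fk_measure :: "'v set \<Rightarrow> 'v set set \<Rightarrow> 'v set set \<Rightarrow> real \<Rightarrow> real \<Rightarrow> ('v set \<Rightarrow> bool) set \<Rightarrow> real" where
  "fk_measure V E \<alpha> p q A =
     (\<Sum>\<omega>\<in>A \<inter> configs E. fk_weight V E \<alpha> p q \<omega>) / (\<Sum>\<omega>\<in>configs E. fk_weight V E \<alpha> p q \<omega>)"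

definition bern_measure :: "'v set set \<Rightarrow> ('v set \<Rightarrow> real) \<Rightarrow> ('v set \<Rightarrow> bool) set \<Rightarrow> real" where
  "bern_measure E pe A = (\<Sum>\<omega>\<in>A \<inter> configs E. \<Prod>e\<in>E. if \<omega> e then pe e else 1 - pe e)"

definition increasing_event :: "'v set set \<Rightarrow> ('v set \<Rightarrow> bool) set \<Rightarrow> bool" where
  "increasing_event E A \<longleftrightarrow>
     (\<forall>\<omega>\<in>configs E. \<forall>\<omega>'\<in>configs E. \<omega> \<in> A \<and> (\<forall>e. \<omega> e \<longrightarrow> \<omega>' e) \<longrightarrow> \<omega>' \<in> A)"

definition stoch_dom :: "'v set set \<Rightarrow> (('v set \<Rightarrow> bool) set \<Rightarrow> real) \<Rightarrow> (('v set \<Rightarrow> bool) set \<Rightarrow> real) \<Rightarrow> bool" where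
  "stoch_dom E \<mu> \<mu>' \<longleftrightarrow> (\<forall>A \<subseteq> configs E. increasing_event E A \<longrightarrow> \<mu> A \<le> \<mu>' A)"

definition dual_p :: "real \<Rightarrow> real \<Rightarrow> real" where
  "dual_p p q = p / (p + q * (1 - p))"

end

theory Submission
  imports Defs
begin

definition pr :: "'v set set \<Rightarrow> ('v set \<Rightarrow> real) \<Rightarrow> ('v set \<Rightarrow> bool) \<Rightarrow> real" where
  "pr E pe \<omega> = (\<Prod>e\<in>E. if \<omega> e then pe e else 1 - pe e)"

lemma configs_eq: "configs E = (\<lambda>S e. e \<in> S) ` Pow E"
proof
  show "configs E \<subseteq> (\<lambda>S e. e \<in> S) ` Pow E"
  proof
    fix x assume "x \<in> configs E"
    then show "x \<in> (\<lambda>S e. e \<in> S) ` Pow E"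
      unfolding configs_def by (intro image_eqI[of _ _ "{e. x e}"]) auto
  qed
qed (auto simp: configs_def)

lemma finite_configs: "finite E \<Longrightarrow> finite (configs E)"
  by (simp add: configs_eq)

lemma configs_insert_split:
  assumes "finite F" "e \<notin> F"
  shows "configs (insert e F) = (\<lambda>\<xi>. \<xi>(e:=True)) ` configs F \<union> configs F"
proof (intro equalityI subsetI)
  fix \<omega> assume w: "\<omega> \<in> configs (insert e F)"
  show "\<omega> \<in> (\<lambda>\<xi>. \<xi>(e:=True)) ` configs F \<union> configs F"
  proof (cases "\<omega> e")
    case True
    have "\<omega> = (\<omega>(e:=False))(e:=True)" using True by (simp add: fun_eq_iff)
    moreover have "\<omega>(e:=False) \<in> configs F" using w by (simp add: configs_def)
    ultimately show ?thesis by blast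
  next
    case False
    then have "\<omega> \<in> configs F" using w by (auto simp: configs_def)
    then show ?thesis by blast
  qed
next
  fix \<omega> assume "\<omega> \<in> (\<lambda>\<xi>. \<xi>(e:=True)) ` configs F \<union> configs F"
  then show "\<omega> \<in> configs (insert e F)"
  proof
    assume "\<omega> \<in> (\<lambda>\<xi>. \<xi>(e:=True)) ` configs F"
    then obtain \<xi> where "\<xi> \<in> configs F" "\<omega> = \<xi>(e:=True)" by blast
    then show ?thesis unfolding configs_def mem_Collect_eq
    proof (intro allI impI)
      fix e' assume "e' \<notin> insert e F"
      then have "e' \<noteq> e" "e' \<notin> F" by auto
      then show "\<not> \<omega> e'" using \<open>\<xi> \<in> configs F\<close> \<open>\<omega> = \<xi>(e:=True)\<close> by (simp add: configs_def)
    qed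
  next
    assume "\<omega> \<in> configs F" then show ?thesis unfolding configs_def by blast
  qed
qed

lemma sum_configs_insert:
  assumes "finite F" "e \<notin> F"
  shows "(\<Sum>\<omega>\<in>configs (insert e F). f \<omega>) = (\<Sum>\<xi>\<in>configs F. f (\<xi>(e:=True))) + (\<Sum>\<xi>\<in>configs F. f \<xi>)"
proof -
  have d: "(\<lambda>\<xi>. \<xi>(e:=True)) ` configs F \<inter> configs F = {}"
  proof -
    have "\<xi>(e:=True) \<notin> configs F" for \<xi>
    proof
      assume "\<xi>(e:=True) \<in> configs F"
      then have "\<not> (\<xi>(e:=True)) e" using assms(2) unfolding configs_def by blast
      then show False by simp
    qed
    then show ?thesis by blast
  qed
  have i: "inj_on (\<lambda>\<xi>. \<xi>(e:=True)) (configs F)"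
  proof (rule inj_onI)
    fix x y assume "x \<in> configs F" "y \<in> configs F" "x(e:=True) = y(e:=True)"
    then have "x e = y e" using assms(2) by (simp add: configs_def)
    moreover have "x e' = y e'" if "e' \<noteq> e" for e' using \<open>x(e:=True) = y(e:=True)\<close> that
      by (metis fun_upd_other)
    ultimately show "x = y" by (intro ext) (metis)
  qed
  have fF: "finite (configs F)" using assms(1) by (rule finite_configs)
  have 1: "sum f (configs (insert e F)) = sum f ((\<lambda>\<xi>. \<xi>(e:=True)) ` configs F \<union> configs F)"
    by (rule arg_cong[where f="sum f"], rule configs_insert_split[OF assms])
  have 2: "sum f ((\<lambda>\<xi>. \<xi>(e:=True)) ` configs F \<union> configs F)
     = sum f ((\<lambda>\<xi>. \<xi>(e:=True)) ` configs F) + sum f (configs F)"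
    by (rule sum.union_disjoint) (use d fF in auto)
  have 3: "sum f ((\<lambda>\<xi>. \<xi>(e:=True)) ` configs F) = (\<Sum>\<xi>\<in>configs F. f (\<xi>(e:=True)))"
    by (rule sum.reindex_cong[OF i refl refl])
  show ?thesis unfolding 1 2 3 by (rule refl)
qed

lemma pr_insert_T:
  assumes "finite F" "e \<notin> F"
  shows "pr (insert e F) pe (\<xi>(e:=True)) = pe e * pr F pe \<xi>"
  unfolding pr_def using assms by (auto intro!: prod.cong)

lemma pr_insert_F:
  assumes "finite F" "e \<notin> F" "\<xi> \<in> configs F"
  shows "pr (insert e F) pe \<xi> = (1 - pe e) * pr F pe \<xi>"
  unfolding pr_def using assms by (auto simp: configs_def)

lemma pr_nonneg: "\<forall>e\<in>E. 0 \<le> pe e \<and> pe e \<le> 1 \<Longrightarrow> 0 \<le> pr E pe \<omega>"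
  unfolding pr_def by (rule prod_nonneg) auto

definition Bs where "Bs E pe A = (\<Sum>\<omega>\<in>configs E. if \<omega> \<in> A then pr E pe \<omega> else 0)"
definition Ws :: "'v set set \<Rightarrow> (('v set \<Rightarrow> bool) \<Rightarrow> real) \<Rightarrow> ('v set \<Rightarrow> bool) set \<Rightarrow> real" where "Ws E w A = (\<Sum>\<omega>\<in>configs E. if \<omega> \<in> A then w \<omega> else 0)"

lemma Bs_mono: "finite E \<Longrightarrow> \<forall>e\<in>E. 0 \<le> pe e \<and> pe e \<le> 1 \<Longrightarrow> A \<inter> configs E \<subseteq> A' \<Longrightarrow> Bs E pe A \<le> Bs E pe A'"
  unfolding Bs_def by (rule sum_mono) (auto intro: pr_nonneg)

lemma arith1:
  fixes S1 S0 B1 B0 W1 W0 p :: real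
  assumes "B1*W1 \<le> S1" "B0*W0 \<le> S0" "0 \<le> (B1-B0)*((1-p)*W1 - p*W0)"
  shows "(p*B1+(1-p)*B0)*(W1+W0) \<le> S1+S0"
proof -
  have "B1 * W1 + B0 * W0 - (p * B1 + (1 - p) * B0) * (W1 + W0)
      = (B1 - B0) * ((1 - p) * W1 - p * W0)" by (simp add: algebra_simps)
  then show ?thesis using assms by linarith
qed
lemma arith2:
  fixes S1 S0 B1 B0 W1 W0 p :: real
  assumes "B1*W1 \<ge> S1" "B0*W0 \<ge> S0" "0 \<le> (B1-B0)*(p*W0 - (1-p)*W1)"
  shows "(p*B1+(1-p)*B0)*(W1+W0) \<ge> S1+S0"
proof -
  have "(p * B1 + (1 - p) * B0) * (W1 + W0) - (B1 * W1 + B0 * W0)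
      = (B1 - B0) * (p * W0 - (1 - p) * W1)" by (simp add: algebra_simps)
  then show ?thesis using assms by linarith
qed

lemma step_lemma:
  assumes F: "finite F" "e \<notin> F" and pe: "\<forall>e\<in>insert e F. 0 \<le> pe e \<and> pe e \<le> 1"
    and inc: "increasing_event (insert e F) A"
    and IH1: "Bs F pe {\<xi>. \<xi>(e:=True) \<in> A} * Ws F (\<lambda>\<xi>. w (\<xi>(e:=True))) UNIV
               \<le> Ws F (\<lambda>\<xi>. w (\<xi>(e:=True))) {\<xi>. \<xi>(e:=True) \<in> A}"
    and IH0: "Bs F pe A * Ws F w UNIV \<le> Ws F w A"
    and mar: "pe e * Ws F w UNIV \<le> (1 - pe e) * Ws F (\<lambda>\<xi>. w (\<xi>(e:=True))) UNIV"
  shows "Bs (insert e F) pe A * Ws (insert e F) w UNIV \<le> Ws (insert e F) w A"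
proof -
  define B1 where "B1 = Bs F pe {\<xi>. \<xi>(e:=True) \<in> A}"
  define B0 where "B0 = Bs F pe A"
  define W1 where "W1 = Ws F (\<lambda>\<xi>. w (\<xi>(e:=True))) UNIV"
  define W0 where "W0 = Ws F w UNIV"
  have pF: "\<forall>e\<in>F. 0 \<le> pe e \<and> pe e \<le> 1" using pe by auto
  have "A \<inter> configs F \<subseteq> {\<xi>. \<xi>(e:=True) \<in> A}"
  proof
    fix \<xi> assume "\<xi> \<in> A \<inter> configs F"
    moreover have "\<xi>(e:=True) \<in> configs (insert e F)" "\<xi> \<in> configs (insert e F)"
      using \<open>\<xi> \<in> A \<inter> configs F\<close> by (auto simp: configs_def)
    moreover have "\<forall>e'. \<xi> e' \<longrightarrow> (\<xi>(e:=True)) e'" by simp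
    ultimately have "\<xi>(e:=True) \<in> A"
      using inc unfolding increasing_event_def by blast
    then show "\<xi> \<in> {\<xi>. \<xi>(e:=True) \<in> A}" by simp
  qed
  then have B01: "B0 \<le> B1" unfolding B0_def B1_def by (rule Bs_mono[OF F(1) pF])
  have B: "Bs (insert e F) pe A = pe e * B1 + (1 - pe e) * B0"
    unfolding Bs_def B1_def B0_def sum_configs_insert[OF F]
    by (simp add: pr_insert_T[OF F] pr_insert_F[OF F] sum_distrib_left if_distrib cong: if_cong)
  have W: "Ws (insert e F) w UNIV = W1 + W0"
    unfolding Ws_def W1_def W0_def sum_configs_insert[OF F] by simp
  have S: "Ws (insert e F) w A = Ws F (\<lambda>\<xi>. w (\<xi>(e:=True))) {\<xi>. \<xi>(e:=True) \<in> A} + Ws F w A"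
    unfolding Ws_def sum_configs_insert[OF F] by simp
  have id: "B1 * W1 + B0 * W0 - (pe e * B1 + (1 - pe e) * B0) * (W1 + W0)
      = (B1 - B0) * ((1 - pe e) * W1 - pe e * W0)" by (simp add: algebra_simps)
  have "0 \<le> (B1 - B0) * ((1 - pe e) * W1 - pe e * W0)"
    using B01 mar unfolding W0_def W1_def by (intro mult_nonneg_nonneg) auto
  moreover have "B1 * W1 \<le> Ws F (\<lambda>\<xi>. w (\<xi>(e:=True))) {\<xi>. \<xi>(e:=True) \<in> A}"
    using IH1 unfolding B1_def W1_def .
  moreover have "B0 * W0 \<le> Ws F w A" using IH0 unfolding B0_def W0_def .
  ultimately show ?thesis unfolding B W S by - (rule arith1; assumption)
qed

lemma step_lemma_up:
  assumes F: "finite F" "e \<notin> F" and pe: "\<forall>e\<in>insert e F. 0 \<le> pe e \<and> pe e \<le> 1"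
    and inc: "increasing_event (insert e F) A"
    and IH1: "Bs F pe {\<xi>. \<xi>(e:=True) \<in> A} * Ws F (\<lambda>\<xi>. w (\<xi>(e:=True))) UNIV
               \<ge> Ws F (\<lambda>\<xi>. w (\<xi>(e:=True))) {\<xi>. \<xi>(e:=True) \<in> A}"
    and IH0: "Bs F pe A * Ws F w UNIV \<ge> Ws F w A"
    and mar: "pe e * Ws F w UNIV \<ge> (1 - pe e) * Ws F (\<lambda>\<xi>. w (\<xi>(e:=True))) UNIV"
  shows "Bs (insert e F) pe A * Ws (insert e F) w UNIV \<ge> Ws (insert e F) w A"
proof -
  define B1 where "B1 = Bs F pe {\<xi>. \<xi>(e:=True) \<in> A}"
  define B0 where "B0 = Bs F pe A"
  define W1 where "W1 = Ws F (\<lambda>\<xi>. w (\<xi>(e:=True))) UNIV"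
  define W0 where "W0 = Ws F w UNIV"
  have pF: "\<forall>e\<in>F. 0 \<le> pe e \<and> pe e \<le> 1" using pe by auto
  have "A \<inter> configs F \<subseteq> {\<xi>. \<xi>(e:=True) \<in> A}"
  proof
    fix \<xi> assume "\<xi> \<in> A \<inter> configs F"
    moreover have "\<xi>(e:=True) \<in> configs (insert e F)" "\<xi> \<in> configs (insert e F)"
      using \<open>\<xi> \<in> A \<inter> configs F\<close> by (auto simp: configs_def)
    moreover have "\<forall>e'. \<xi> e' \<longrightarrow> (\<xi>(e:=True)) e'" by simp
    ultimately have "\<xi>(e:=True) \<in> A"
      using inc unfolding increasing_event_def by blast
    then show "\<xi> \<in> {\<xi>. \<xi>(e:=True) \<in> A}" by simp
  qed
  then have B01: "B0 \<le> B1" unfolding B0_def B1_def by (rule Bs_mono[OF F(1) pF])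
  have B: "Bs (insert e F) pe A = pe e * B1 + (1 - pe e) * B0"
    unfolding Bs_def B1_def B0_def sum_configs_insert[OF F]
    by (simp add: pr_insert_T[OF F] pr_insert_F[OF F] sum_distrib_left if_distrib cong: if_cong)
  have W: "Ws (insert e F) w UNIV = W1 + W0"
    unfolding Ws_def W1_def W0_def sum_configs_insert[OF F] by simp
  have S: "Ws (insert e F) w A = Ws F (\<lambda>\<xi>. w (\<xi>(e:=True))) {\<xi>. \<xi>(e:=True) \<in> A} + Ws F w A"
    unfolding Ws_def sum_configs_insert[OF F] by simp
  have id: "(pe e * B1 + (1 - pe e) * B0) * (W1 + W0) - (B1 * W1 + B0 * W0)
      = (B1 - B0) * (pe e * W0 - (1 - pe e) * W1)" by (simp add: algebra_simps)
  have "0 \<le> (B1 - B0) * (pe e * W0 - (1 - pe e) * W1)"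
    using B01 mar unfolding W0_def W1_def by (intro mult_nonneg_nonneg) auto
  moreover have "B1 * W1 \<ge> Ws F (\<lambda>\<xi>. w (\<xi>(e:=True))) {\<xi>. \<xi>(e:=True) \<in> A}"
    using IH1 unfolding B1_def W1_def .
  moreover have "B0 * W0 \<ge> Ws F w A" using IH0 unfolding B0_def W0_def .
  ultimately show ?thesis unfolding B W S by - (rule arith2; assumption)
qed

lemma configs_mono: "F \<subseteq> E \<Longrightarrow> configs F \<subseteq> configs E"
  unfolding configs_def by blast

lemma configs_upd_F: "\<xi> \<in> configs F \<Longrightarrow> e \<notin> F \<Longrightarrow> \<xi>(e:=False) = \<xi>"
  unfolding configs_def by (intro ext) auto

lemma configs_upd_T: "\<xi> \<in> configs F \<Longrightarrow> \<xi>(e:=True) \<in> configs (insert e F)"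
  unfolding configs_def by auto

lemma configs_upd_gen: "\<xi> \<in> configs F \<Longrightarrow> e \<in> F \<Longrightarrow> \<xi>(e:=b) \<in> configs F"
  unfolding configs_def by auto

lemma configs_empty: "configs {} = {\<lambda>_. False}"
  unfolding configs_def by auto

lemma inc_sub0: "increasing_event (insert e F) A \<Longrightarrow> increasing_event F A"
  unfolding increasing_event_def using configs_mono[of F "insert e F"] by blast

lemma inc_sub1: "increasing_event (insert e F) A \<Longrightarrow> increasing_event F {\<xi>. \<xi>(e:=True) \<in> A}"
  unfolding increasing_event_def
proof (intro ballI impI)
  fix \<omega> \<omega>' assume H: "\<forall>\<omega>\<in>configs (insert e F). \<forall>\<omega>'\<in>configs (insert e F). \<omega> \<in> A \<and> (\<forall>e. \<omega> e \<longrightarrow> \<omega>' e) \<longrightarrow> \<omega>' \<in> A"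
    and w: "\<omega> \<in> configs F" "\<omega>' \<in> configs F"
    and c: "\<omega> \<in> {\<xi>. \<xi>(e := True) \<in> A} \<and> (\<forall>e. \<omega> e \<longrightarrow> \<omega>' e)"
  have "\<forall>e'. (\<omega>(e:=True)) e' \<longrightarrow> (\<omega>'(e:=True)) e'" using c by simp
  then have "\<omega>'(e:=True) \<in> A" using H configs_upd_T[OF w(1)] configs_upd_T[OF w(2)] c by blast
  then show "\<omega>' \<in> {\<xi>. \<xi>(e := True) \<in> A}" by simp
qed

lemma Bs_empty: "Bs {} pe A = (if (\<lambda>_. False) \<in> A then 1 else 0)"
  unfolding Bs_def configs_empty pr_def by simp
lemma Ws_empty: "Ws {} w A = (if (\<lambda>_. False) \<in> A then w (\<lambda>_. False) else 0)"
  unfolding Ws_def configs_empty by simp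

definition loc_low :: "'v set set \<Rightarrow> ('v set \<Rightarrow> real) \<Rightarrow> (('v set \<Rightarrow> bool) \<Rightarrow> real) \<Rightarrow> bool" where
  "loc_low E pe w \<longleftrightarrow> (\<forall>\<omega>\<in>configs E. \<forall>e\<in>E. pe e * w (\<omega>(e:=False)) \<le> (1 - pe e) * w (\<omega>(e:=True)))"
definition loc_up :: "'v set set \<Rightarrow> ('v set \<Rightarrow> real) \<Rightarrow> (('v set \<Rightarrow> bool) \<Rightarrow> real) \<Rightarrow> bool" where
  "loc_up E pe w \<longleftrightarrow> (\<forall>\<omega>\<in>configs E. \<forall>e\<in>E. pe e * w (\<omega>(e:=False)) \<ge> (1 - pe e) * w (\<omega>(e:=True)))"

lemma loc_low_sub:
  assumes "loc_low (insert e F) pe w" "e \<notin> F"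
  shows "loc_low F pe w" "loc_low F pe (\<lambda>\<xi>. w (\<xi>(e:=True)))"
proof -
  show "loc_low F pe w" using assms configs_mono[of F "insert e F"] unfolding loc_low_def by blast
  show "loc_low F pe (\<lambda>\<xi>. w (\<xi>(e:=True)))" unfolding loc_low_def
  proof (intro ballI)
    fix \<omega> e' assume "\<omega> \<in> configs F" "e' \<in> F"
    then have ne: "e' \<noteq> e" using assms(2) by auto
    have "pe e' * w (\<omega>(e:=True, e':=False)) \<le> (1 - pe e') * w (\<omega>(e:=True, e':=True))"
      using assms(1) configs_upd_T[OF \<open>\<omega> \<in> configs F\<close>] \<open>e' \<in> F\<close> unfolding loc_low_def by blast
    then show "pe e' * w (\<omega>(e':=False, e:=True)) \<le> (1 - pe e') * w (\<omega>(e':=True, e:=True))"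
      using ne by (simp add: fun_upd_twist)
  qed
qed

lemma loc_up_sub:
  assumes "loc_up (insert e F) pe w" "e \<notin> F"
  shows "loc_up F pe w" "loc_up F pe (\<lambda>\<xi>. w (\<xi>(e:=True)))"
proof -
  show "loc_up F pe w" using assms configs_mono[of F "insert e F"] unfolding loc_up_def by blast
  show "loc_up F pe (\<lambda>\<xi>. w (\<xi>(e:=True)))" unfolding loc_up_def
  proof (intro ballI)
    fix \<omega> e' assume "\<omega> \<in> configs F" "e' \<in> F"
    then have ne: "e' \<noteq> e" using assms(2) by auto
    have "pe e' * w (\<omega>(e:=True, e':=False)) \<ge> (1 - pe e') * w (\<omega>(e:=True, e':=True))"
      using assms(1) configs_upd_T[OF \<open>\<omega> \<in> configs F\<close>] \<open>e' \<in> F\<close> unfolding loc_up_def by blast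
    then show "pe e' * w (\<omega>(e':=False, e:=True)) \<ge> (1 - pe e') * w (\<omega>(e':=True, e:=True))"
      using ne by (simp add: fun_upd_twist)
  qed
qed

lemma mar_low:
  assumes "loc_low (insert e F) pe w" "e \<notin> F"
  shows "pe e * Ws F w UNIV \<le> (1 - pe e) * Ws F (\<lambda>\<xi>. w (\<xi>(e:=True))) UNIV"
proof -
  have H: "pe e * w \<xi> \<le> (1 - pe e) * w (\<xi>(e:=True))" if x: "\<xi> \<in> configs F" for \<xi>
  proof -
    have "pe e * w (\<xi>(e:=False)) \<le> (1 - pe e) * w (\<xi>(e:=True))"
      using assms(1) configs_mono[of F "insert e F"] x unfolding loc_low_def by blast
    then show ?thesis using configs_upd_F[OF x assms(2)] by simp
  qed
  have "(\<Sum>\<xi>\<in>configs F. pe e * w \<xi>) \<le> (\<Sum>\<xi>\<in>configs F. (1 - pe e) * w (\<xi>(e:=True)))"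
    by (rule sum_mono) (erule H)
  then show ?thesis unfolding Ws_def by (simp only: if_True UNIV_I sum_distrib_left)
qed

lemma mar_up:
  assumes "loc_up (insert e F) pe w" "e \<notin> F"
  shows "pe e * Ws F w UNIV \<ge> (1 - pe e) * Ws F (\<lambda>\<xi>. w (\<xi>(e:=True))) UNIV"
proof -
  have H: "pe e * w \<xi> \<ge> (1 - pe e) * w (\<xi>(e:=True))" if x: "\<xi> \<in> configs F" for \<xi>
  proof -
    have "pe e * w (\<xi>(e:=False)) \<ge> (1 - pe e) * w (\<xi>(e:=True))"
      using assms(1) configs_mono[of F "insert e F"] x unfolding loc_up_def by blast
    then show ?thesis using configs_upd_F[OF x assms(2)] by simp
  qed
  have "(\<Sum>\<xi>\<in>configs F. pe e * w \<xi>) \<ge> (\<Sum>\<xi>\<in>configs F. (1 - pe e) * w (\<xi>(e:=True)))"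
    by (rule sum_mono) (erule H)
  then show ?thesis unfolding Ws_def by (simp only: if_True UNIV_I sum_distrib_left)
qed

lemma dom_low:
  assumes "finite E"
  shows "\<forall>e\<in>E. 0 \<le> pe e \<and> pe e \<le> 1 \<Longrightarrow> loc_low E pe w \<Longrightarrow> increasing_event E A
    \<Longrightarrow> Bs E pe A * Ws E w UNIV \<le> Ws E w A"
  using assms
proof (induction E arbitrary: w A rule: finite_induct)
  case empty
  then show ?case by (simp add: Bs_empty Ws_empty)
next
  case (insert e F)
  show ?case
  proof (rule step_lemma[OF insert(1,2) insert(4,6)])
    show "Bs F pe {\<xi>. \<xi>(e:=True) \<in> A} * Ws F (\<lambda>\<xi>. w (\<xi>(e:=True))) UNIV
               \<le> Ws F (\<lambda>\<xi>. w (\<xi>(e:=True))) {\<xi>. \<xi>(e:=True) \<in> A}"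
      using insert.IH[of "\<lambda>\<xi>. w (\<xi>(e:=True))" "{\<xi>. \<xi>(e:=True) \<in> A}"] insert(4) loc_low_sub[OF insert(5,2)] inc_sub1[OF insert(6)] by blast
    show "Bs F pe A * Ws F w UNIV \<le> Ws F w A"
      using insert.IH[of w A] insert(4) loc_low_sub[OF insert(5,2)] inc_sub0[OF insert(6)] by blast
    show "pe e * Ws F w UNIV \<le> (1 - pe e) * Ws F (\<lambda>\<xi>. w (\<xi>(e:=True))) UNIV"
      by (rule mar_low[OF insert(5,2)])
  qed
qed

lemma dom_up:
  assumes "finite E"
  shows "\<forall>e\<in>E. 0 \<le> pe e \<and> pe e \<le> 1 \<Longrightarrow> loc_up E pe w \<Longrightarrow> increasing_event E A
    \<Longrightarrow> Bs E pe A * Ws E w UNIV \<ge> Ws E w A"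
  using assms
proof (induction E arbitrary: w A rule: finite_induct)
  case empty
  then show ?case by (simp add: Bs_empty Ws_empty)
next
  case (insert e F)
  show ?case
  proof (rule step_lemma_up[OF insert(1,2) insert(4,6)])
    show "Bs F pe {\<xi>. \<xi>(e:=True) \<in> A} * Ws F (\<lambda>\<xi>. w (\<xi>(e:=True))) UNIV
               \<ge> Ws F (\<lambda>\<xi>. w (\<xi>(e:=True))) {\<xi>. \<xi>(e:=True) \<in> A}"
      using insert.IH[of "\<lambda>\<xi>. w (\<xi>(e:=True))" "{\<xi>. \<xi>(e:=True) \<in> A}"] insert(4) loc_up_sub[OF insert(5,2)] inc_sub1[OF insert(6)] by blast
    show "Bs F pe A * Ws F w UNIV \<ge> Ws F w A"
      using insert.IH[of w A] insert(4) loc_up_sub[OF insert(5,2)] inc_sub0[OF insert(6)] by blast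
    show "pe e * Ws F w UNIV \<ge> (1 - pe e) * Ws F (\<lambda>\<xi>. w (\<xi>(e:=True))) UNIV"
      by (rule mar_up[OF insert(5,2)])
  qed
qed

lemma loc_low_cong: "(\<forall>e\<in>E. pe e = pe' e) \<Longrightarrow> loc_low E pe w = loc_low E pe' w"
  unfolding loc_low_def by simp
lemma loc_up_cong: "(\<forall>e\<in>E. pe e = pe' e) \<Longrightarrow> loc_up E pe w = loc_up E pe' w"
  unfolding loc_up_def by simp

lemma configs_remove_F: "\<omega> \<in> configs E \<Longrightarrow> \<omega>(e:=False) \<in> configs (E - {e})"
  unfolding configs_def by auto

lemma final_low:
  assumes fin: "finite E" and e0: "e0 \<in> E" and c: "0 \<le> c" "c \<le> 1"
    and loc: "loc_low E (\<lambda>_. c) w" and pos: "\<forall>\<omega>\<in>configs E. 0 < w \<omega>"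
    and strict: "\<exists>\<omega>\<in>configs E. c * w (\<omega>(e0:=False)) < (1 - c) * w (\<omega>(e0:=True))"
  shows "\<exists>m. c < m \<and> m \<le> 1 \<and> (\<forall>A. increasing_event E A \<longrightarrow>
           Bs E (\<lambda>e. if e = e0 then m else c) A * Ws E w UNIV \<le> Ws E w A)"
proof -
  define F where "F = E - {e0}"
  have EF: "E = insert e0 F" and finF: "finite F" and nF: "e0 \<notin> F" using e0 fin by (auto simp: F_def)
  define W1 where "W1 = Ws F (\<lambda>\<xi>. w (\<xi>(e0:=True))) UNIV"
  define W0 where "W0 = Ws F w UNIV"
  have W: "Ws E w UNIV = W1 + W0"
    unfolding Ws_def W1_def W0_def EF sum_configs_insert[OF finF nF] by simp
  have pos0: "0 < w \<xi>" if "\<xi> \<in> configs F" for \<xi>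
    using pos that configs_mono[of F E] EF by blast
  have pos1: "0 < w (\<xi>(e0:=True))" if "\<xi> \<in> configs F" for \<xi>
    using pos configs_upd_T[OF that, of e0] EF by simp
  have fcF: "finite (configs F)" using finF by (rule finite_configs)
  have neF: "configs F \<noteq> {}" unfolding configs_def by auto
  have W1p: "0 < W1" unfolding W1_def Ws_def using pos1 fcF neF by (simp add: sum_pos)
  have W0p: "0 < W0" unfolding W0_def Ws_def using pos0 fcF neF by (simp add: sum_pos)
  have loc': "loc_low (insert e0 F) (\<lambda>_. c) w" using loc EF by simp
  have le: "c * w \<xi> \<le> (1 - c) * w (\<xi>(e0:=True))" if x: "\<xi> \<in> configs F" for \<xi>
  proof -
    have "c * w (\<xi>(e0:=False)) \<le> (1 - c) * w (\<xi>(e0:=True))"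
      using loc configs_mono[of F E] EF x e0 unfolding loc_low_def by blast
    then show ?thesis using configs_upd_F[OF x nF] by simp
  qed
  obtain \<omega> where om: "\<omega> \<in> configs E" "c * w (\<omega>(e0:=False)) < (1 - c) * w (\<omega>(e0:=True))"
    using strict by blast
  have om': "\<omega>(e0:=False) \<in> configs F" using configs_remove_F[OF om(1)] F_def by simp
  have "(\<Sum>\<xi>\<in>configs F. c * w \<xi>) < (\<Sum>\<xi>\<in>configs F. (1 - c) * w (\<xi>(e0:=True)))"
    by (rule sum_strict_mono_ex1[OF fcF]) (use le om om' in \<open>auto intro!: bexI[of _ "\<omega>(e0:=False)"]\<close>)
  then have st: "c * W0 < (1 - c) * W1"
    unfolding W0_def W1_def Ws_def by (simp only: if_True UNIV_I sum_distrib_left)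
  define m where "m = W1 / (W1 + W0)"
  have m1: "c < m" unfolding m_def using st W1p W0p by (simp add: field_simps)
  have m2: "m \<le> 1" unfolding m_def using W1p W0p by (simp add: field_simps)
  define pe where "pe = (\<lambda>e. if e = e0 then m else c)"
  have pe01: "\<forall>e\<in>insert e0 F. 0 \<le> pe e \<and> pe e \<le> 1" unfolding pe_def using c m1 m2 by auto
  have peF: "\<forall>e\<in>F. pe e = c" unfolding pe_def using nF by auto
  have locs: "loc_low F pe w" "loc_low F pe (\<lambda>\<xi>. w (\<xi>(e0:=True)))"
    using loc_low_sub[OF loc' nF] loc_low_cong[OF peF] by auto
  have pF: "\<forall>e\<in>F. 0 \<le> pe e \<and> pe e \<le> 1" using pe01 by auto
  have "Bs E pe A * Ws E w UNIV \<le> Ws E w A" if inc: "increasing_event E A" for A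
    unfolding EF
  proof (rule step_lemma[OF finF nF pe01])
    show "increasing_event (insert e0 F) A" using inc EF by simp
    show "Bs F pe {\<xi>. \<xi>(e0:=True) \<in> A} * Ws F (\<lambda>\<xi>. w (\<xi>(e0:=True))) UNIV
               \<le> Ws F (\<lambda>\<xi>. w (\<xi>(e0:=True))) {\<xi>. \<xi>(e0:=True) \<in> A}"
      by (rule dom_low[OF finF pF locs(2) inc_sub1]) (use inc EF in simp)
    show "Bs F pe A * Ws F w UNIV \<le> Ws F w A"
      by (rule dom_low[OF finF pF locs(1) inc_sub0]) (use inc EF in simp)
    have "pe e0 * W0 = (1 - pe e0) * W1" unfolding pe_def m_def using W1p W0p by (simp add: field_simps)
    then show "pe e0 * Ws F w UNIV \<le> (1 - pe e0) * Ws F (\<lambda>\<xi>. w (\<xi>(e0:=True))) UNIV"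
      unfolding W0_def W1_def by simp
  qed
  then show ?thesis using m1 m2 unfolding pe_def by blast
qed

lemma final_up:
  assumes fin: "finite E" and e0: "e0 \<in> E" and c: "0 \<le> c" "c \<le> 1"
    and loc: "loc_up E (\<lambda>_. c) w" and pos: "\<forall>\<omega>\<in>configs E. 0 < w \<omega>"
    and strict: "\<exists>\<omega>\<in>configs E. c * w (\<omega>(e0:=False)) > (1 - c) * w (\<omega>(e0:=True))"
  shows "\<exists>m. 0 \<le> m \<and> m < c \<and> (\<forall>A. increasing_event E A \<longrightarrow>
           Bs E (\<lambda>e. if e = e0 then m else c) A * Ws E w UNIV \<ge> Ws E w A)"
proof -
  define F where "F = E - {e0}"
  have EF: "E = insert e0 F" and finF: "finite F" and nF: "e0 \<notin> F" using e0 fin by (auto simp: F_def)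
  define W1 where "W1 = Ws F (\<lambda>\<xi>. w (\<xi>(e0:=True))) UNIV"
  define W0 where "W0 = Ws F w UNIV"
  have W: "Ws E w UNIV = W1 + W0"
    unfolding Ws_def W1_def W0_def EF sum_configs_insert[OF finF nF] by simp
  have pos0: "0 < w \<xi>" if "\<xi> \<in> configs F" for \<xi>
    using pos that configs_mono[of F E] EF by blast
  have pos1: "0 < w (\<xi>(e0:=True))" if "\<xi> \<in> configs F" for \<xi>
    using pos configs_upd_T[OF that, of e0] EF by simp
  have fcF: "finite (configs F)" using finF by (rule finite_configs)
  have neF: "configs F \<noteq> {}" unfolding configs_def by auto
  have W1p: "0 < W1" unfolding W1_def Ws_def using pos1 fcF neF by (simp add: sum_pos)
  have W0p: "0 < W0" unfolding W0_def Ws_def using pos0 fcF neF by (simp add: sum_pos)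
  have loc': "loc_up (insert e0 F) (\<lambda>_. c) w" using loc EF by simp
  have le: "(1 - c) * w (\<xi>(e0:=True)) \<le> c * w \<xi>" if x: "\<xi> \<in> configs F" for \<xi>
  proof -
    have "c * w (\<xi>(e0:=False)) \<ge> (1 - c) * w (\<xi>(e0:=True))"
      using loc configs_mono[of F E] EF x e0 unfolding loc_up_def by blast
    then show ?thesis using configs_upd_F[OF x nF] by simp
  qed
  obtain \<omega> where om: "\<omega> \<in> configs E" "c * w (\<omega>(e0:=False)) > (1 - c) * w (\<omega>(e0:=True))"
    using strict by blast
  have om': "\<omega>(e0:=False) \<in> configs F" using configs_remove_F[OF om(1)] F_def by simp
  have "(\<Sum>\<xi>\<in>configs F. (1 - c) * w (\<xi>(e0:=True))) < (\<Sum>\<xi>\<in>configs F. c * w \<xi>)"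
    by (rule sum_strict_mono_ex1[OF fcF]) (use le om om' in \<open>auto intro!: bexI[of _ "\<omega>(e0:=False)"]\<close>)
  then have st: "(1 - c) * W1 < c * W0"
    unfolding W0_def W1_def Ws_def by (simp only: if_True UNIV_I sum_distrib_left)
  define m where "m = W1 / (W1 + W0)"
  have m1: "m < c" unfolding m_def using st W1p W0p by (simp add: field_simps)
  have m2: "0 \<le> m" unfolding m_def using W1p W0p by (simp add: field_simps)
  define pe where "pe = (\<lambda>e. if e = e0 then m else c)"
  have pe01: "\<forall>e\<in>insert e0 F. 0 \<le> pe e \<and> pe e \<le> 1" unfolding pe_def using c m1 m2 by auto
  have peF: "\<forall>e\<in>F. pe e = c" unfolding pe_def using nF by auto
  have locs: "loc_up F pe w" "loc_up F pe (\<lambda>\<xi>. w (\<xi>(e0:=True)))"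
    using loc_up_sub[OF loc' nF] loc_up_cong[OF peF] by auto
  have pF: "\<forall>e\<in>F. 0 \<le> pe e \<and> pe e \<le> 1" using pe01 by auto
  have "Bs E pe A * Ws E w UNIV \<ge> Ws E w A" if inc: "increasing_event E A" for A
    unfolding EF
  proof (rule step_lemma_up[OF finF nF pe01])
    show "increasing_event (insert e0 F) A" using inc EF by simp
    show "Bs F pe {\<xi>. \<xi>(e0:=True) \<in> A} * Ws F (\<lambda>\<xi>. w (\<xi>(e0:=True))) UNIV
               \<ge> Ws F (\<lambda>\<xi>. w (\<xi>(e0:=True))) {\<xi>. \<xi>(e0:=True) \<in> A}"
      by (rule dom_up[OF finF pF locs(2) inc_sub1]) (use inc EF in simp)
    show "Bs F pe A * Ws F w UNIV \<ge> Ws F w A"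
      by (rule dom_up[OF finF pF locs(1) inc_sub0]) (use inc EF in simp)
    have "pe e0 * W0 = (1 - pe e0) * W1" unfolding pe_def m_def using W1p W0p by (simp add: field_simps)
    then show "pe e0 * Ws F w UNIV \<ge> (1 - pe e0) * Ws F (\<lambda>\<xi>. w (\<xi>(e0:=True))) UNIV"
      unfolding W0_def W1_def by simp
  qed
  then show ?thesis using m1 m2 unfolding pe_def by blast
qed


lemma quot_img:
  assumes R: "equiv V R" and S: "equiv V S" and RS: "R \<subseteq> S" and x: "x \<in> V"
  shows "S `` (R `` {x}) = S `` {x}"
proof
  show "S `` {x} \<subseteq> S `` (R `` {x})"
    using equiv_class_self[OF R x] by blast
  show "S `` (R `` {x}) \<subseteq> S `` {x}"
  proof
    fix z assume "z \<in> S `` (R `` {x})"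
    then obtain y where "(x, y) \<in> R" "(y, z) \<in> S" by blast
    then have "(x, y) \<in> S" "(y, z) \<in> S" using RS by auto
    then have "(x, z) \<in> S" using S unfolding equiv_def trans_def by blast
    then show "z \<in> S `` {x}" by simp
  qed
qed

lemma quot_img_eq:
  assumes R: "equiv V R" and S: "equiv V S" and RS: "R \<subseteq> S"
  shows "(\<lambda>X. S `` X) ` (V // R) = V // S"
proof
  show "(\<lambda>X. S `` X) ` (V // R) \<subseteq> V // S"
    by (auto elim!: quotientE simp: quot_img[OF R S RS] intro: quotientI)
  show "V // S \<subseteq> (\<lambda>X. S `` X) ` (V // R)"
  proof
    fix Y assume "Y \<in> V // S"
    then obtain x where "x \<in> V" "Y = S `` {x}" by (auto elim!: quotientE)
    then show "Y \<in> (\<lambda>X. S `` X) ` (V // R)"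
      using quot_img[OF R S RS] by (intro image_eqI[of _ _ "R `` {x}"]) (auto intro: quotientI)
  qed
qed

lemma finite_quot: "finite V \<Longrightarrow> finite (V // R)"
  unfolding quotient_def by auto

lemma quot_card_le:
  assumes R: "equiv V R" and S: "equiv V S" and RS: "R \<subseteq> S" and fin: "finite V"
  shows "card (V // S) \<le> card (V // R)"
  using card_image_le[OF finite_quot[OF fin], of "\<lambda>X. S `` X" R] quot_img_eq[OF R S RS] by simp

lemma quot_card_less:
  assumes R: "equiv V R" and S: "equiv V S" and RS: "R \<subseteq> S" and fin: "finite V"
    and uv: "(u, v) \<in> S" "(u, v) \<notin> R"
  shows "card (V // S) < card (V // R)"
proof -
  have uV: "u \<in> V" "v \<in> V" using uv S unfolding equiv_def by auto
  have "\<not> inj_on (\<lambda>X. S `` X) (V // R)"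
  proof
    assume inj: "inj_on (\<lambda>X. S `` X) (V // R)"
    have "S `` {u} = S `` {v}" using equiv_class_eq_iff[OF S] uv(1) by blast
    then have "S `` (R `` {u}) = S `` (R `` {v})"
      unfolding quot_img[OF R S RS uV(1)] quot_img[OF R S RS uV(2)] .
    then have "R `` {u} = R `` {v}"
      using inj_onD[OF inj _ quotientI[OF uV(1)] quotientI[OF uV(2)]] by blast
    then show False using eq_equiv_class_iff[OF R uV] uv(2) by simp
  qed
  then have "card ((\<lambda>X. S `` X) ` (V // R)) \<noteq> card (V // R)"
    using eq_card_imp_inj_on[OF finite_quot[OF fin]] by blast
  then show ?thesis
    using card_image_le[OF finite_quot[OF fin], of "\<lambda>X. S `` X" R] quot_img_eq[OF R S RS] by simp
qed

lemma quot_card_plus1: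
  assumes R: "equiv V R" and S: "equiv V S" and RS: "R \<subseteq> S" and fin: "finite V"
    and uV: "u \<in> V" "v \<in> V"
    and SR: "S \<subseteq> R \<union> (R``{u} \<union> R``{v}) \<times> (R``{u} \<union> R``{v})"
  shows "card (V // R) \<le> card (V // S) + 1"
proof -
  define A where "A = V // R - {R `` {u}}"
  have inj: "inj_on (\<lambda>X. S `` X) A"
  proof (rule inj_onI)
    fix X Y assume X: "X \<in> A" and Y: "Y \<in> A" and eq: "S `` X = S `` Y"
    obtain x where x: "x \<in> V" "X = R `` {x}" using X unfolding A_def by (auto elim!: quotientE)
    obtain y where y: "y \<in> V" "Y = R `` {y}" using Y unfolding A_def by (auto elim!: quotientE)
    have xu: "(u, x) \<notin> R" using X x uV unfolding A_def by (auto simp: equiv_class_eq_iff[OF R])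
    have yu: "(u, y) \<notin> R" using Y y uV unfolding A_def by (auto simp: equiv_class_eq_iff[OF R])
    have "S `` {x} = S `` {y}" using eq x y quot_img[OF R S RS] by simp
    then have "(x, y) \<in> S" using eq_equiv_class_iff[OF S x(1) y(1)] by simp
    then have "(x, y) \<in> R \<or> ((v, x) \<in> R \<and> (v, y) \<in> R)" using SR xu yu by blast
    then have "(x, y) \<in> R"
      using R unfolding equiv_def sym_def trans_def by blast
    then show "X = Y" using x y eq_equiv_class_iff[OF R x(1) y(1)] by simp
  qed
  have "card A = card (V // R) - 1"
    unfolding A_def using quotientI[OF uV(1), of R] finite_quot[OF fin] by simp
  moreover have "card ((\<lambda>X. S `` X) ` A) = card A" using card_image[OF inj] .
  moreover have "(\<lambda>X. S `` X) ` A \<subseteq> V // S" using quot_img_eq[OF R S RS] unfolding A_def by blast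
  then have "card ((\<lambda>X. S `` X) ` A) \<le> card (V // S)" using card_mono finite_quot[OF fin] by blast
  ultimately show ?thesis by linarith
qed

locale fkg =
  fixes V :: "'v set" and E :: "'v set set" and bd :: "'v set" and \<alpha> :: "'v set set"
  assumes sg: "simple_graph V E" and bdV: "bd \<subseteq> V" and part: "partition_on bd \<alpha>"
begin

definition gen where
  "gen \<omega> = Id_on V \<union> {(u, v). {u, v} \<in> E \<and> \<omega> {u, v}} \<union> (\<Union>B\<in>\<alpha>. B \<times> B)"

lemma R_def': "open_conn V E \<alpha> \<omega> = (gen \<omega>)\<^sup>+"
  unfolding open_conn_def gen_def ..

lemma finV: "finite V" using sg unfolding simple_graph_def by blast

lemma edge_ends: "e \<in> E \<Longrightarrow> \<exists>u v. e = {u, v} \<and> u \<in> V \<and> v \<in> V \<and> u \<noteq> v"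
  using sg unfolding simple_graph_def by blast

lemma edge_mem: assumes "{u, v} \<in> E" shows "u \<in> V" "v \<in> V"
proof -
  obtain a b where "{u, v} = {a, b}" "a \<in> V" "b \<in> V" using edge_ends[OF assms] by metis
  then show "u \<in> V" "v \<in> V" by (auto simp: doubleton_eq_iff)
qed

lemma blockV: "B \<in> \<alpha> \<Longrightarrow> B \<subseteq> V"
  using partition_onD1[OF part] bdV by blast

lemma gen_sub: "gen \<omega> \<subseteq> V \<times> V"
  unfolding gen_def using edge_mem blockV by blast

lemma sym_gen: "sym (gen \<omega>)"
  unfolding gen_def sym_def by (auto simp: insert_commute)

lemma equiv_R: "equiv V (open_conn V E \<alpha> \<omega>)"
  unfolding R_def'
proof (rule equivI)
  show "(gen \<omega>)\<^sup>+ \<subseteq> V \<times> V" by (rule trancl_subset_Sigma[OF gen_sub])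
  show "refl_on V ((gen \<omega>)\<^sup>+)" unfolding refl_on_def gen_def by blast
  show "sym ((gen \<omega>)\<^sup>+)" by (rule sym_trancl[OF sym_gen])
  show "trans ((gen \<omega>)\<^sup>+)" by simp
qed

lemma WR_equiv: "equiv V (wired_rel V \<alpha>)"
proof (rule equivI)
  show "wired_rel V \<alpha> \<subseteq> V \<times> V" unfolding wired_rel_def using blockV by blast
  show "refl_on V (wired_rel V \<alpha>)" unfolding refl_on_def wired_rel_def by blast
  show "sym (wired_rel V \<alpha>)" unfolding sym_def wired_rel_def by blast
  show "trans (wired_rel V \<alpha>)" unfolding trans_def
  proof (intro allI impI)
    fix x y z assume xy: "(x, y) \<in> wired_rel V \<alpha>" and yz: "(y, z) \<in> wired_rel V \<alpha>"
    have dj: "\<And>B B'. B \<in> \<alpha> \<Longrightarrow> B' \<in> \<alpha> \<Longrightarrow> y \<in> B \<Longrightarrow> y \<in> B' \<Longrightarrow> B = B'"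
      using disjointD[OF partition_onD2[OF part]] by blast
    show "(x, z) \<in> wired_rel V \<alpha>" using xy yz dj unfolding wired_rel_def by blast
  qed
qed

lemma WR_sub: "wired_rel V \<alpha> \<subseteq> open_conn V E \<alpha> \<omega>"
  unfolding R_def' wired_rel_def gen_def by auto

lemma R_closed: "open_conn V E \<alpha> (\<lambda>_. False) = wired_rel V \<alpha>"
proof -
  have "gen (\<lambda>_. False) = wired_rel V \<alpha>" unfolding gen_def wired_rel_def by auto
  moreover have "trans (wired_rel V \<alpha>)" using WR_equiv unfolding equiv_def by blast
  ultimately show ?thesis unfolding R_def' by simp
qed

lemma gen_upd: assumes "e \<in> E"
  shows "gen (\<omega>(e:=True)) = gen (\<omega>(e:=False)) \<union> {(a, b). {a, b} = e}"
proof -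
  have "{(u, v). {u, v} \<in> E \<and> (\<omega>(e:=True)) {u, v}}
      = {(u, v). {u, v} \<in> E \<and> (\<omega>(e:=False)) {u, v}} \<union> {(a, b). {a, b} = e}"
  proof (intro equalityI subsetI)
    fix x assume "x \<in> {(u, v). {u, v} \<in> E \<and> (\<omega>(e:=True)) {u, v}}"
    then obtain u v where "x = (u, v)" "{u, v} \<in> E" "(\<omega>(e:=True)) {u, v}" by blast
    then show "x \<in> {(u, v). {u, v} \<in> E \<and> (\<omega>(e:=False)) {u, v}} \<union> {(a, b). {a, b} = e}"
      by (cases "{u, v} = e") auto
  next
    fix x assume "x \<in> {(u, v). {u, v} \<in> E \<and> (\<omega>(e:=False)) {u, v}} \<union> {(a, b). {a, b} = e}"
    then obtain u v where x: "x = (u, v)" and "({u, v} \<in> E \<and> (\<omega>(e:=False)) {u, v}) \<or> {u, v} = e" by blast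
    then show "x \<in> {(u, v). {u, v} \<in> E \<and> (\<omega>(e:=True)) {u, v}}"
      using assms by (cases "{u, v} = e") auto
  qed
  then show ?thesis unfolding gen_def by blast
qed

lemma R_mono: "e \<in> E \<Longrightarrow> open_conn V E \<alpha> (\<omega>(e:=False)) \<subseteq> open_conn V E \<alpha> (\<omega>(e:=True))"
  unfolding R_def' by (rule trancl_mono_subset) (simp add: gen_upd)

lemma R_upper:
  fixes \<omega> :: "'v set \<Rightarrow> bool"
  assumes e: "e = {u, v}" "e \<in> E"
  defines "R0 \<equiv> open_conn V E \<alpha> (\<omega>(e:=False))"
  shows "open_conn V E \<alpha> (\<omega>(e:=True)) \<subseteq> R0 \<union> (R0``{u} \<union> R0``{v}) \<times> (R0``{u} \<union> R0``{v})"
proof -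
  define C where "C = R0``{u} \<union> R0``{v}"
  define T where "T = R0 \<union> C \<times> C"
  have eq: "equiv V R0" unfolding R0_def by (rule equiv_R)
  have sy: "\<And>a b. (a, b) \<in> R0 \<Longrightarrow> (b, a) \<in> R0" using eq unfolding equiv_def sym_def by blast
  have tr: "\<And>a b c. (a, b) \<in> R0 \<Longrightarrow> (b, c) \<in> R0 \<Longrightarrow> (a, c) \<in> R0" using eq unfolding equiv_def trans_def by blast
  have uv: "u \<in> V" "v \<in> V" using edge_mem e by auto
  have uC: "u \<in> C" "v \<in> C" unfolding C_def using uv equiv_class_self[OF eq] by auto
  have cl: "\<And>a b. a \<in> C \<Longrightarrow> (a, b) \<in> R0 \<Longrightarrow> b \<in> C" unfolding C_def using tr by blast
  have cl2: "\<And>a b. b \<in> C \<Longrightarrow> (a, b) \<in> R0 \<Longrightarrow> a \<in> C" using cl sy by blast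
  have trT: "trans T" unfolding trans_def T_def
  proof (intro allI impI)
    fix x y z assume "(x, y) \<in> R0 \<union> C \<times> C" "(y, z) \<in> R0 \<union> C \<times> C"
    then show "(x, z) \<in> R0 \<union> C \<times> C" using tr cl cl2 by blast
  qed
  have g0: "gen (\<omega>(e:=False)) \<subseteq> R0" unfolding R0_def R_def' by auto
  have "gen (\<omega>(e:=True)) \<subseteq> T"
  proof -
    have "{(a, b). {a, b} = e} \<subseteq> C \<times> C"
    proof
      fix x assume "x \<in> {(a, b). {a, b} = e}"
      then obtain a b where "x = (a, b)" "{a, b} = {u, v}" using e by blast
      then show "x \<in> C \<times> C" using uC by (auto simp: doubleton_eq_iff)
    qed
    then show ?thesis unfolding gen_upd[OF e(2)] T_def using g0 by blast
  qed
  then have "(gen (\<omega>(e:=True)))\<^sup>+ \<subseteq> T" using trancl_mono_subset trancl_id[OF trT] by metis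
  then show ?thesis unfolding R_def' T_def C_def .
qed

lemma R_same:
  assumes e: "e = {u, v}" "e \<in> E" and uv: "(u, v) \<in> open_conn V E \<alpha> (\<omega>(e:=False))"
  shows "open_conn V E \<alpha> (\<omega>(e:=True)) = open_conn V E \<alpha> (\<omega>(e:=False))"
proof
  define R0 where "R0 = open_conn V E \<alpha> (\<omega>(e:=False))"
  have eq: "equiv V R0" unfolding R0_def by (rule equiv_R)
  have uv': "(u, v) \<in> R0" using uv unfolding R0_def .
  have sy: "\<And>a b. (a, b) \<in> R0 \<Longrightarrow> (b, a) \<in> R0" using eq unfolding equiv_def sym_def by blast
  have tr: "\<And>a b c. (a, b) \<in> R0 \<Longrightarrow> (b, c) \<in> R0 \<Longrightarrow> (a, c) \<in> R0" using eq unfolding equiv_def trans_def by blast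
  have cls: "R0``{u} = R0``{v}" using equiv_class_eq_iff[OF eq, of u v] uv' by blast
  have cc: "R0``{u} \<times> R0``{u} \<subseteq> R0"
  proof
    fix x assume "x \<in> R0``{u} \<times> R0``{u}"
    then obtain a b where "x = (a, b)" "(u, a) \<in> R0" "(u, b) \<in> R0" by blast
    then show "x \<in> R0" using sy tr by blast
  qed
  have up: "open_conn V E \<alpha> (\<omega>(e:=True)) \<subseteq> R0 \<union> (R0``{u} \<union> R0``{v}) \<times> (R0``{u} \<union> R0``{v})"
    unfolding R0_def by (rule R_upper[OF e])
  have "(R0``{u} \<union> R0``{v}) \<times> (R0``{u} \<union> R0``{v}) \<subseteq> R0" using cls cc by simp
  then have "R0 \<union> (R0``{u} \<union> R0``{v}) \<times> (R0``{u} \<union> R0``{v}) \<subseteq> R0" by (rule Un_least[OF subset_refl])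
  with up have "open_conn V E \<alpha> (\<omega>(e:=True)) \<subseteq> R0" by (rule subset_trans)
  then show "open_conn V E \<alpha> (\<omega>(e:=True)) \<subseteq> open_conn V E \<alpha> (\<omega>(e:=False))" unfolding R0_def .
  show "open_conn V E \<alpha> (\<omega>(e:=False)) \<subseteq> open_conn V E \<alpha> (\<omega>(e:=True))" by (rule R_mono[OF e(2)])
qed

abbreviation "k \<omega> \<equiv> num_clusters V E \<alpha> \<omega>"

lemma k_le: "e \<in> E \<Longrightarrow> k (\<omega>(e:=True)) \<le> k (\<omega>(e:=False))"
  unfolding num_clusters_def by (rule quot_card_le[OF equiv_R equiv_R R_mono finV])

lemma k_plus1: "e \<in> E \<Longrightarrow> k (\<omega>(e:=False)) \<le> k (\<omega>(e:=True)) + 1"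
proof -
  assume e: "e \<in> E"
  obtain u v where uv: "e = {u, v}" "u \<in> V" "v \<in> V" using edge_ends[OF e] by blast
  show ?thesis unfolding num_clusters_def
    by (rule quot_card_plus1[OF equiv_R equiv_R R_mono[OF e] finV uv(2,3) R_upper[OF uv(1) e]])
qed

lemma k_less: "e = {u, v} \<Longrightarrow> e \<in> E \<Longrightarrow> (u, v) \<notin> open_conn V E \<alpha> (\<omega>(e:=False))
   \<Longrightarrow> k (\<omega>(e:=True)) < k (\<omega>(e:=False))"
  unfolding num_clusters_def
proof (rule quot_card_less[OF equiv_R equiv_R R_mono finV])
  assume "e = {u, v}" "e \<in> E"
  then show "(u, v) \<in> open_conn V E \<alpha> (\<omega>(e:=True))"
    unfolding R_def' gen_upd[OF \<open>e \<in> E\<close>] by (intro r_into_trancl) blast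
qed

lemma k_eq: "e = {u, v} \<Longrightarrow> e \<in> E \<Longrightarrow> (u, v) \<in> open_conn V E \<alpha> (\<omega>(e:=False))
   \<Longrightarrow> k (\<omega>(e:=True)) = k (\<omega>(e:=False))"
  unfolding num_clusters_def using R_same by metis


abbreviation "cls x \<equiv> wired_rel V \<alpha> `` {x}"

lemma wends: "wired_ends V \<alpha> {a, b} = {cls a, cls b}"
  unfolding wired_ends_def by simp

lemma exists_split_edge:
  assumes conn: "graph_connected V E" and c2: "card (wired_vertices V \<alpha>) \<ge> 2"
  shows "\<exists>e\<in>E. \<exists>u v. e = {u, v} \<and> (u, v) \<notin> wired_rel V \<alpha>"
proof (rule ccontr)
  assume "\<not> ?thesis"
  then have H: "\<And>u v. {u, v} \<in> E \<Longrightarrow> (u, v) \<in> wired_rel V \<alpha>" by blast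
  have eq: "equiv V (wired_rel V \<alpha>)" by (rule WR_equiv)
  have tr: "\<And>a b c. (a, b) \<in> wired_rel V \<alpha> \<Longrightarrow> (b, c) \<in> wired_rel V \<alpha> \<Longrightarrow> (a, c) \<in> wired_rel V \<alpha>"
    using eq unfolding equiv_def trans_def by blast
  have all: "(u, y) \<in> wired_rel V \<alpha>" if u: "u \<in> V" and "(u, y) \<in> {(x, y). {x, y} \<in> E}\<^sup>*" for u y
    using that(2)
  proof (induction rule: rtrancl_induct)
    case base then show ?case using u eq unfolding equiv_def refl_on_def by blast
  next
    case (step y z) then show ?case using H tr by blast
  qed
  have "V // wired_rel V \<alpha> \<subseteq> {V}"
  proof
    fix X assume "X \<in> V // wired_rel V \<alpha>"
    then obtain x where x: "x \<in> V" "X = cls x" by (auto elim!: quotientE)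
    have "cls x \<subseteq> V" using eq unfolding equiv_def by blast
    moreover have "V \<subseteq> cls x" using all[OF x(1)] conn x(1) unfolding graph_connected_def by blast
    ultimately show "X \<in> {V}" using x by blast
  qed
  then have "card (V // wired_rel V \<alpha>) \<le> card {V}" by (intro card_mono) auto
  then have "card (V // wired_rel V \<alpha>) \<le> 1" by simp
  then show False using c2 unfolding wired_vertices_def by simp
qed

lemma mgconn:
  assumes conn: "graph_connected V E"
  shows "mg_connected (wired_vertices V \<alpha>) E (wired_ends V \<alpha>)"
  unfolding mg_connected_def wired_vertices_def
proof (intro ballI)
  fix X Y assume "X \<in> V // wired_rel V \<alpha>" "Y \<in> V // wired_rel V \<alpha>"
  then obtain x y where xy: "x \<in> V" "y \<in> V" "X = cls x" "Y = cls y" by (auto elim!: quotientE)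
  define M where "M = {(a, b). \<exists>e\<in>E. wired_ends V \<alpha> e = {a, b}}"
  have "(x, y) \<in> {(x, y). {x, y} \<in> E}\<^sup>*" using conn xy unfolding graph_connected_def by blast
  then have "(cls x, cls y) \<in> M\<^sup>*"
  proof (induction rule: rtrancl_induct)
    case base then show ?case by simp
  next
    case (step y z)
    then have "(cls y, cls z) \<in> M" unfolding M_def using wends by blast
    then show ?case using step.IH by simp
  qed
  then show "(X, Y) \<in> {(a, b). \<exists>e\<in>E. wired_ends V \<alpha> e = {a, b}}\<^sup>*" using xy unfolding M_def by simp
qed


lemma exists_cycle_edge:
  assumes conn: "graph_connected V E"
    and nt: "\<not> mg_tree (wired_vertices V \<alpha>) E (wired_ends V \<alpha>)"
  shows "\<exists>e\<in>E. \<exists>\<omega>\<in>configs E. \<exists>u v. e = {u, v} \<and> (u, v) \<in> open_conn V E \<alpha> (\<omega>(e:=False))"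
proof -
  obtain vs es where cyc: "mg_cycle (wired_vertices V \<alpha>) E (wired_ends V \<alpha>) vs es"
    using nt mgconn[OF conn] unfolding mg_tree_def by blast
  define n where "n = length vs"
  have n0: "0 < n" and len: "length es = n" and dvs: "distinct vs" and des: "distinct es"
    and svs: "set vs \<subseteq> V // wired_rel V \<alpha>" and ses: "set es \<subseteq> E"
    and ends: "\<And>i. i < n \<Longrightarrow> wired_ends V \<alpha> (es ! i) = {vs ! i, vs ! (Suc i mod n)}"
    using cyc unfolding mg_cycle_def n_def wired_vertices_def by auto
  define e0 where "e0 = es ! 0"
  have e0E: "e0 \<in> E" using ses len n0 unfolding e0_def by (metis nth_mem subsetD)
  define \<omega>0 where "\<omega>0 = (\<lambda>e'. e' \<in> E \<and> e' \<noteq> e0)"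
  have om0: "\<omega>0 \<in> configs E" unfolding configs_def \<omega>0_def by auto
  have om0': "\<omega>0(e0:=False) = \<omega>0" unfolding \<omega>0_def by (intro ext) auto
  define R0 where "R0 = open_conn V E \<alpha> \<omega>0"
  have eq: "equiv V R0" unfolding R0_def by (rule equiv_R)
  have sy: "\<And>a b. (a, b) \<in> R0 \<Longrightarrow> (b, a) \<in> R0" using eq unfolding equiv_def sym_def by blast
  have tr: "\<And>a b c. (a, b) \<in> R0 \<Longrightarrow> (b, c) \<in> R0 \<Longrightarrow> (a, c) \<in> R0" using eq unfolding equiv_def trans_def by blast
  have WR0: "wired_rel V \<alpha> \<subseteq> R0" unfolding R0_def by (rule WR_sub)
  have eqW: "equiv V (wired_rel V \<alpha>)" by (rule WR_equiv)
  define CR where "CR X Y \<longleftrightarrow> (\<forall>x\<in>X. \<forall>y\<in>Y. (x, y) \<in> R0)" for X Y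
  have cls_mem: "x \<in> cls a \<Longrightarrow> (a, x) \<in> R0" for x a using WR0 by blast
  have CR_refl: "CR X X" if XW: "X \<in> V // wired_rel V \<alpha>" for X
  proof -
    obtain a where "X = cls a" using XW by (auto elim!: quotientE)
    then show ?thesis unfolding CR_def using cls_mem sy tr by blast
  qed
  have CR_ne: "X \<noteq> {}" if "X \<in> V // wired_rel V \<alpha>" for X
    using in_quotient_imp_non_empty[OF eqW that] .
  have CR_trans: "CR X Z" if "CR X Y" "CR Y Z" "Y \<noteq> {}" for X Y Z
    using that tr unfolding CR_def by blast
  have CR_sym: "CR Y X" if "CR X Y" for X Y using that sy unfolding CR_def by blast
  have CR_edge: "CR X Y" if e': "e' \<in> E" "e' \<noteq> e0" "wired_ends V \<alpha> e' = {X, Y}" for e' X Y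
  proof -
    obtain a b where ab: "e' = {a, b}" "a \<in> V" "b \<in> V" using edge_ends[OF e'(1)] by blast
    have "(a, b) \<in> R0" unfolding R0_def R_def' gen_def \<omega>0_def using e' ab by (intro r_into_trancl) auto
    moreover have "{cls a, cls b} = {X, Y}" using e'(3) ab(1) wends by simp
    then have "(X = cls a \<and> Y = cls b) \<or> (X = cls b \<and> Y = cls a)" by (auto simp: doubleton_eq_iff)
    ultimately show ?thesis unfolding CR_def using cls_mem sy tr by blast
  qed
  have vsW: "vs ! i \<in> V // wired_rel V \<alpha>" if "i < n" for i using svs that n_def by (metis nth_mem subsetD)
  have chain: "1 \<le> j \<Longrightarrow> j \<le> n \<Longrightarrow> CR (vs ! (1 mod n)) (vs ! (j mod n))" for j
  proof (induction j)
    case 0 then show ?case by simp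
  next
    case (Suc j)
    show ?case
    proof (cases "j = 0")
      case True then show ?thesis using CR_refl vsW n0 by simp
    next
      case False
      then have jn: "j < n" "1 \<le> j" using Suc.prems by auto
      have ih: "CR (vs ! (1 mod n)) (vs ! j)" using Suc.IH jn by simp
      have "es ! j \<noteq> e0" unfolding e0_def using des len jn by (simp add: nth_eq_iff_index_eq)
      moreover have "es ! j \<in> E" using ses len jn by (metis nth_mem subsetD)
      ultimately have "CR (vs ! j) (vs ! (Suc j mod n))" using CR_edge ends[OF jn(1)] by blast
      then show ?thesis using CR_trans[OF ih] CR_ne[OF vsW[OF jn(1)]] by blast
    qed
  qed
  define v1 where "v1 = vs ! (Suc 0 mod n)"
  have c01: "CR v1 (vs ! 0)" using chain[of n] n0 unfolding v1_def by simp
  obtain u v where uv: "e0 = {u, v}" "u \<in> V" "v \<in> V" using edge_ends[OF e0E] by blast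
  have eqc: "{cls u, cls v} = {vs ! 0, v1}"
  proof -
    have "wired_ends V \<alpha> (es ! 0) = {vs ! 0, v1}" using ends[OF n0] unfolding v1_def by simp
    then show ?thesis unfolding e0_def[symmetric] uv(1) wends .
  qed
  have cuv: "cls u \<in> {vs ! 0, v1}" "cls v \<in> {vs ! 0, v1}" unfolding eqc[symmetric] by simp_all
  have W01: "vs ! 0 \<in> V // wired_rel V \<alpha>" "v1 \<in> V // wired_rel V \<alpha>" using vsW n0 unfolding v1_def by auto
  have allCR: "CR X Y" if XY: "X \<in> {vs ! 0, v1}" "Y \<in> {vs ! 0, v1}" for X Y
  proof -
    from XY have "X = vs ! 0 \<or> X = v1" "Y = vs ! 0 \<or> Y = v1" by simp_all
    then show ?thesis using CR_refl[OF W01(1)] CR_refl[OF W01(2)] c01 CR_sym[OF c01] by (elim disjE) simp_all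
  qed
  have "u \<in> cls u" "v \<in> cls v" using equiv_class_self[OF eqW] uv by auto
  then have "(u, v) \<in> R0" using allCR[OF cuv] unfolding CR_def by blast
  then show ?thesis using e0E om0 uv(1) om0' unfolding R0_def by metis
qed

end


lemma dual_facts:
  fixes p q :: real
  assumes p: "0 < p" "p < 1" and q: "0 < q"
  shows "0 < dual_p p q" "dual_p p q < 1" "(1 - dual_p p q) * p = q * (dual_p p q * (1 - p))"
    "q > 1 \<Longrightarrow> dual_p p q < p" "q < 1 \<Longrightarrow> p < dual_p p q"
proof -
  have D: "0 < p + q * (1 - p)" using p q by (simp add: add_pos_pos)
  have D1: "p < p + q * (1 - p)" using p q by simp
  show "0 < dual_p p q" unfolding dual_p_def using p D by simp
  show "dual_p p q < 1" unfolding dual_p_def using D D1 by simp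
  show "(1 - dual_p p q) * p = q * (dual_p p q * (1 - p))" unfolding dual_p_def using D
    by (simp add: field_simps)
  show "q > 1 \<Longrightarrow> dual_p p q < p"
  proof -
    assume "q > 1"
    then have "0 < (q - 1) * (1 - p)" using p by simp
    then have "1 < p + q * (1 - p)" by (simp add: algebra_simps)
    then show ?thesis unfolding dual_p_def using p D by (simp add: divide_less_eq)
  qed
  show "q < 1 \<Longrightarrow> p < dual_p p q"
  proof -
    assume "q < 1"
    then have "0 < (1 - q) * (1 - p)" using p by simp
    then have "p + q * (1 - p) < 1" by (simp add: algebra_simps)
    then show ?thesis unfolding dual_p_def using p D by (simp add: less_divide_eq)
  qed
qed

lemma fk_split:
  fixes \<omega> :: "'v set \<Rightarrow> bool" and p :: real
  assumes fin: "finite E" and e: "e \<in> E"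
  defines "P \<equiv> (\<Prod>e'\<in>E - {e}. if \<omega> e' then p else 1 - p)"
  shows "fk_weight V E \<alpha> p q (\<omega>(e:=True)) = p * P * q ^ num_clusters V E \<alpha> (\<omega>(e:=True))"
    "fk_weight V E \<alpha> p q (\<omega>(e:=False)) = (1 - p) * P * q ^ num_clusters V E \<alpha> (\<omega>(e:=False))"
proof -
  have h: "(\<Prod>e'\<in>E - {e}. if (\<omega>(e:=b)) e' then p else 1 - p) = P" for b
    unfolding P_def by (rule prod.cong) auto
  have h2: "(\<Prod>e'\<in>E. if (\<omega>(e:=b)) e' then p else 1 - p) = (if b then p else 1 - p) * P" for b
    by (subst prod.remove[OF fin e]) (simp only: h fun_upd_same)
  show "fk_weight V E \<alpha> p q (\<omega>(e:=True)) = p * P * q ^ num_clusters V E \<alpha> (\<omega>(e:=True))"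
    "fk_weight V E \<alpha> p q (\<omega>(e:=False)) = (1 - p) * P * q ^ num_clusters V E \<alpha> (\<omega>(e:=False))"
    unfolding fk_weight_def h2 by simp_all
qed

lemma P_pos: "0 < p \<Longrightarrow> p < (1::real) \<Longrightarrow> 0 < (\<Prod>e'\<in>F. if \<omega> e' then p else 1 - p)"
  by (rule prod_pos) auto

lemma scal:
  fixes p q P :: real and k0 k1 :: nat
  assumes p: "0 < p" "p < 1" and q: "0 < q" and P: "0 < P"
  defines "d \<equiv> dual_p p q"
  shows "q > 1 \<Longrightarrow> k0 \<le> Suc k1 \<Longrightarrow> d * ((1-p)*P*q^k0) \<le> (1-d) * (p*P*q^k1)"
    "q > 1 \<Longrightarrow> k0 = k1 \<Longrightarrow> d * ((1-p)*P*q^k0) < (1-d) * (p*P*q^k1)"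
    "q < 1 \<Longrightarrow> k1 \<le> k0 \<Longrightarrow> p * ((1-p)*P*q^k0) \<le> (1-p) * (p*P*q^k1)"
    "q < 1 \<Longrightarrow> k1 < k0 \<Longrightarrow> p * ((1-p)*P*q^k0) < (1-p) * (p*P*q^k1)"
    "q > 1 \<Longrightarrow> k1 \<le> k0 \<Longrightarrow> p * ((1-p)*P*q^k0) \<ge> (1-p) * (p*P*q^k1)"
    "q > 1 \<Longrightarrow> k1 < k0 \<Longrightarrow> p * ((1-p)*P*q^k0) > (1-p) * (p*P*q^k1)"
    "q < 1 \<Longrightarrow> k0 \<le> Suc k1 \<Longrightarrow> d * ((1-p)*P*q^k0) \<ge> (1-d) * (p*P*q^k1)"
    "q < 1 \<Longrightarrow> k0 = k1 \<Longrightarrow> d * ((1-p)*P*q^k0) > (1-d) * (p*P*q^k1)"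
proof -
  note df = dual_facts[OF p q, folded d_def]
  define a where "a = d * (1 - p) * P"
  define b where "b = p * (1 - p) * P"
  have a: "0 < a" unfolding a_def using df p P by simp
  have b: "0 < b" unfolding b_def using p P by simp
  have I1: "(1-d) * (p*P*q^k1) = a * q^(Suc k1)"
  proof -
    have "(1-d) * (p*P*q^k1) = ((1-d) * p) * P * q^k1" by (simp add: algebra_simps)
    also have "\<dots> = q * (d * (1 - p)) * P * q^k1" using df(3) by simp
    also have "\<dots> = a * q^(Suc k1)" unfolding a_def by (simp add: algebra_simps)
    finally show ?thesis .
  qed
  have I2: "d * ((1-p)*P*q^k0) = a * q^k0" unfolding a_def by (simp add: algebra_simps)
  have I3: "p * ((1-p)*P*q^k0) = b * q^k0" "(1-p) * (p*P*q^k1) = b * q^k1" unfolding b_def by (simp_all add: algebra_simps)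
  show "q > 1 \<Longrightarrow> k0 \<le> Suc k1 \<Longrightarrow> d * ((1-p)*P*q^k0) \<le> (1-d) * (p*P*q^k1)"
    unfolding I1 I2 using a by (intro mult_left_mono power_increasing) auto
  show "q > 1 \<Longrightarrow> k0 = k1 \<Longrightarrow> d * ((1-p)*P*q^k0) < (1-d) * (p*P*q^k1)"
    unfolding I1 I2 using a by (intro mult_strict_left_mono power_strict_increasing) auto
  show "q < 1 \<Longrightarrow> k1 \<le> k0 \<Longrightarrow> p * ((1-p)*P*q^k0) \<le> (1-p) * (p*P*q^k1)"
    unfolding I3 using b q by (intro mult_left_mono power_decreasing) auto
  show "q < 1 \<Longrightarrow> k1 < k0 \<Longrightarrow> p * ((1-p)*P*q^k0) < (1-p) * (p*P*q^k1)"
    unfolding I3 using b q by (intro mult_strict_left_mono power_strict_decreasing) auto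
  show "q > 1 \<Longrightarrow> k1 \<le> k0 \<Longrightarrow> p * ((1-p)*P*q^k0) \<ge> (1-p) * (p*P*q^k1)"
    unfolding I3 using b by (intro mult_left_mono power_increasing) auto
  show "q > 1 \<Longrightarrow> k1 < k0 \<Longrightarrow> p * ((1-p)*P*q^k0) > (1-p) * (p*P*q^k1)"
    unfolding I3 using b by (intro mult_strict_left_mono power_strict_increasing) auto
  show "q < 1 \<Longrightarrow> k0 \<le> Suc k1 \<Longrightarrow> d * ((1-p)*P*q^k0) \<ge> (1-d) * (p*P*q^k1)"
    unfolding I1 I2 using a q by (intro mult_left_mono power_decreasing) auto
  show "q < 1 \<Longrightarrow> k0 = k1 \<Longrightarrow> d * ((1-p)*P*q^k0) > (1-d) * (p*P*q^k1)"
    unfolding I1 I2 using a q by (intro mult_strict_left_mono power_strict_decreasing) auto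
qed

lemma w_form:
  fixes p q :: real
  assumes fin: "finite E" and e: "e \<in> E" and p: "0 < p" "p < 1"
  shows "\<exists>P>0. fk_weight V E \<alpha> p q (\<omega>(e:=True)) = p * P * q ^ num_clusters V E \<alpha> (\<omega>(e:=True))
            \<and> fk_weight V E \<alpha> p q (\<omega>(e:=False)) = (1 - p) * P * q ^ num_clusters V E \<alpha> (\<omega>(e:=False))"
  using fk_split[OF fin e, of V \<alpha> p q \<omega>] P_pos[OF p] by blast

lemma bern_Bs: "finite E \<Longrightarrow> bern_measure E pe A = Bs E pe A"
  unfolding bern_measure_def Bs_def pr_def
  by (subst Int_commute, rule sum.inter_restrict[OF finite_configs])

lemma fk_Ws: "finite E \<Longrightarrow> fk_measure V E \<alpha> p q A = Ws E (fk_weight V E \<alpha> p q) A / Ws E (fk_weight V E \<alpha> p q) UNIV"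
  unfolding fk_measure_def Ws_def
  by (subst Int_commute, subst sum.inter_restrict[OF finite_configs]) simp_all

context fkg
begin

lemma finE: "finite E"
proof -
  have "E \<subseteq> Pow V" using edge_ends by blast
  then show ?thesis using finV finite_subset by blast
qed

lemma strict_split:
  assumes conn: "graph_connected V E" and c2: "card (wired_vertices V \<alpha>) \<ge> 2"
  shows "\<exists>e\<in>E. \<exists>\<omega>\<in>configs E. k (\<omega>(e:=True)) < k (\<omega>(e:=False))"
proof -
  obtain e u v where e: "e \<in> E" "e = {u, v}" "(u, v) \<notin> wired_rel V \<alpha>"
    using exists_split_edge[OF conn c2] by blast
  have c: "(\<lambda>_. False) \<in> configs E" unfolding configs_def by simp
  have f: "(\<lambda>_. False)(e:=False) = (\<lambda>_. False)" by (intro ext) simp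
  have "(u, v) \<notin> open_conn V E \<alpha> ((\<lambda>_. False)(e:=False))" unfolding f R_closed by (rule e(3))
  then have "k ((\<lambda>_. False)(e:=True)) < k ((\<lambda>_. False)(e:=False))" by (rule k_less[OF e(2,1)])
  then show ?thesis using c e(1) by blast
qed

lemma strict_cycle:
  assumes conn: "graph_connected V E"
    and nt: "\<not> mg_tree (wired_vertices V \<alpha>) E (wired_ends V \<alpha>)"
  shows "\<exists>e\<in>E. \<exists>\<omega>\<in>configs E. k (\<omega>(e:=True)) = k (\<omega>(e:=False))"
proof -
  obtain e \<omega> u v where h: "e \<in> E" "\<omega> \<in> configs E" "e = {u, v}" "(u, v) \<in> open_conn V E \<alpha> (\<omega>(e:=False))"
    using exists_cycle_edge[OF conn nt] by blast
  show ?thesis using k_eq[OF h(3,1,4)] h(1,2) by blast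
qed

end

theorem theorem1p1:
  fixes V :: "'v set" and E :: "'v set set" and bd :: "'v set" and \<alpha> :: "'v set set"
    and p q :: real
  assumes "simple_graph V E" and "graph_connected V E"
    and "bd \<subseteq> V" and "partition_on bd \<alpha>"
    and "\<not> mg_tree (wired_vertices V \<alpha>) E (wired_ends V \<alpha>)"
    and "card (wired_vertices V \<alpha>) \<ge> 2"
    and "0 < p" and "p < 1" and "0 < q" and "q \<noteq> 1"
  shows "\<exists>\<epsilon> \<epsilon>' :: 'v set \<Rightarrow> real.
     (\<forall>e\<in>E. 0 \<le> \<epsilon> e \<and> \<epsilon> e \<le> 1 \<and> 0 \<le> \<epsilon>' e \<and> \<epsilon>' e \<le> 1) \<and>
     (\<exists>e\<in>E. \<epsilon> e \<noteq> 0) \<and> (\<exists>e\<in>E. \<epsilon>' e \<noteq> 0) \<and>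
     (\<forall>e\<in>E. min p (dual_p p q) + \<epsilon> e \<le> 1 \<and> 0 \<le> max p (dual_p p q) - \<epsilon>' e) \<and>
     stoch_dom E (bern_measure E (\<lambda>e. min p (dual_p p q) + \<epsilon> e)) (fk_measure V E \<alpha> p q) \<and>
     stoch_dom E (fk_measure V E \<alpha> p q) (bern_measure E (\<lambda>e. max p (dual_p p q) - \<epsilon>' e))"

proof -
  interpret fkg V E bd \<alpha> using assms(1,3,4) by unfold_locales
  note fin = finE
  define w where "w = fk_weight V E \<alpha> p q"
  define d where "d = dual_p p q"
  define c where "c = min p d"
  define c' where "c' = max p d"
  have p: "0 < p" "p < 1" and q: "0 < q" using assms by auto
  note df = dual_facts[OF p q, folded d_def]
  have c01: "0 \<le> c" "c \<le> 1" "0 \<le> c'" "c' \<le> 1" unfolding c_def c'_def using df p by auto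
  have wpos: "\<forall>\<omega>\<in>configs E. 0 < w \<omega>"
    unfolding w_def fk_weight_def by (intro ballI mult_pos_pos P_pos[OF p] zero_less_power[OF q])
  have low_any: "c * w (\<omega>(e:=False)) \<le> (1 - c) * w (\<omega>(e:=True))" if e: "e \<in> E" for \<omega> e
  proof -
    obtain P where P: "0 < P" "w (\<omega>(e:=True)) = p * P * q ^ k (\<omega>(e:=True))"
      "w (\<omega>(e:=False)) = (1 - p) * P * q ^ k (\<omega>(e:=False))"
      using w_form[OF fin e p] unfolding w_def by blast
    show ?thesis
    proof (cases "q > 1")
      case True
      then have "c = d" unfolding c_def using df by simp
      then show ?thesis unfolding P(2,3) using scal(1)[OF p q P(1) True] k_plus1[OF e] d_def by simp
    next
      case False
      then have q1: "q < 1" using assms by simp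
      then have "c = p" unfolding c_def using df by simp
      then show ?thesis unfolding P(2,3) using scal(3)[OF p q P(1) q1] k_le[OF e] by simp
    qed
  qed
  have up_any: "c' * w (\<omega>(e:=False)) \<ge> (1 - c') * w (\<omega>(e:=True))" if e: "e \<in> E" for \<omega> e
  proof -
    obtain P where P: "0 < P" "w (\<omega>(e:=True)) = p * P * q ^ k (\<omega>(e:=True))"
      "w (\<omega>(e:=False)) = (1 - p) * P * q ^ k (\<omega>(e:=False))"
      using w_form[OF fin e p] unfolding w_def by blast
    show ?thesis
    proof (cases "q > 1")
      case True
      then have "c' = p" unfolding c'_def using df by simp
      then show ?thesis unfolding P(2,3) using scal(5)[OF p q P(1) True] k_le[OF e] by simp
    next
      case False
      then have q1: "q < 1" using assms by simp
      then have "c' = d" unfolding c'_def using df by simp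
      then show ?thesis unfolding P(2,3) using scal(7)[OF p q P(1) q1] k_plus1[OF e] d_def by simp
    qed
  qed
  have locl: "loc_low E (\<lambda>_. c) w" unfolding loc_low_def using low_any by blast
  have locu: "loc_up E (\<lambda>_. c') w" unfolding loc_up_def using up_any by blast
  have strict_low: "c * w (\<omega>(e:=False)) < (1 - c) * w (\<omega>(e:=True))"
    if e: "e \<in> E" and h1: "q > 1 \<Longrightarrow> k (\<omega>(e:=False)) = k (\<omega>(e:=True))"
       and h2: "q < 1 \<Longrightarrow> k (\<omega>(e:=True)) < k (\<omega>(e:=False))" for \<omega> e
  proof -
    obtain P where P: "0 < P" "w (\<omega>(e:=True)) = p * P * q ^ k (\<omega>(e:=True))"
      "w (\<omega>(e:=False)) = (1 - p) * P * q ^ k (\<omega>(e:=False))"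
      using w_form[OF fin e p] unfolding w_def by blast
    show ?thesis
    proof (cases "q > 1")
      case True
      then have "c = d" unfolding c_def using df by simp
      then show ?thesis unfolding P(2,3) using scal(2)[OF p q P(1) True h1[OF True]] d_def by simp
    next
      case False
      then have q1: "q < 1" using assms by simp
      then have "c = p" unfolding c_def using df by simp
      then show ?thesis unfolding P(2,3) using scal(4)[OF p q P(1) q1 h2[OF q1]] by simp
    qed
  qed
  have strict_up: "c' * w (\<omega>(e:=False)) > (1 - c') * w (\<omega>(e:=True))"
    if e: "e \<in> E" and h1: "q < 1 \<Longrightarrow> k (\<omega>(e:=False)) = k (\<omega>(e:=True))"
       and h2: "q > 1 \<Longrightarrow> k (\<omega>(e:=True)) < k (\<omega>(e:=False))" for \<omega> e
  proof -
    obtain P where P: "0 < P" "w (\<omega>(e:=True)) = p * P * q ^ k (\<omega>(e:=True))"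
      "w (\<omega>(e:=False)) = (1 - p) * P * q ^ k (\<omega>(e:=False))"
      using w_form[OF fin e p] unfolding w_def by blast
    show ?thesis
    proof (cases "q > 1")
      case True
      then have "c' = p" unfolding c'_def using df by simp
      then show ?thesis unfolding P(2,3) using scal(6)[OF p q P(1) True h2[OF True]] by simp
    next
      case False
      then have q1: "q < 1" using assms by simp
      then have "c' = d" unfolding c'_def using df by simp
      then show ?thesis unfolding P(2,3) using scal(8)[OF p q P(1) q1 h1[OF q1]] d_def by simp
    qed
  qed
  obtain es ws where es: "es \<in> E" "ws \<in> configs E" "k (ws(es:=True)) < k (ws(es:=False))"
    using strict_split[OF assms(2) assms(6)] by blast
  obtain ec wc where ec: "ec \<in> E" "wc \<in> configs E" "k (wc(ec:=True)) = k (wc(ec:=False))"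
    using strict_cycle[OF assms(2) assms(5)] by blast
  have sl: "\<exists>e0\<in>E. \<exists>\<omega>\<in>configs E. c * w (\<omega>(e0:=False)) < (1 - c) * w (\<omega>(e0:=True))"
  proof (cases "q > 1")
    case True
    then show ?thesis using strict_low[OF ec(1), of wc] ec by auto
  next
    case False
    then show ?thesis using strict_low[OF es(1), of ws] es by auto
  qed
  have su: "\<exists>e0\<in>E. \<exists>\<omega>\<in>configs E. c' * w (\<omega>(e0:=False)) > (1 - c') * w (\<omega>(e0:=True))"
  proof (cases "q > 1")
    case True
    then show ?thesis using strict_up[OF es(1), of ws] es by auto
  next
    case False
    then show ?thesis using strict_up[OF ec(1), of wc] ec by auto
  qed
  obtain e0 where e0: "e0 \<in> E" "\<exists>\<omega>\<in>configs E. c * w (\<omega>(e0:=False)) < (1 - c) * w (\<omega>(e0:=True))"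
    using sl by blast
  obtain e1 where e1: "e1 \<in> E" "\<exists>\<omega>\<in>configs E. c' * w (\<omega>(e1:=False)) > (1 - c') * w (\<omega>(e1:=True))"
    using su by blast
  obtain m where m: "c < m" "m \<le> 1" and domL: "\<And>A. increasing_event E A \<Longrightarrow>
           Bs E (\<lambda>e. if e = e0 then m else c) A * Ws E w UNIV \<le> Ws E w A"
    using final_low[OF fin e0(1) c01(1,2) locl wpos e0(2)] by blast
  obtain m' where m': "0 \<le> m'" "m' < c'" and domU: "\<And>A. increasing_event E A \<Longrightarrow>
           Bs E (\<lambda>e. if e = e1 then m' else c') A * Ws E w UNIV \<ge> Ws E w A"
    using final_up[OF fin e1(1) c01(3,4) locu wpos e1(2)] by blast
  have Wpos: "0 < Ws E w UNIV"
  proof -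
    have "(\<lambda>_. False) \<in> configs E" unfolding configs_def by simp
    then have "configs E \<noteq> {}" by blast
    then show ?thesis unfolding Ws_def using wpos finite_configs[OF fin] by (simp add: sum_pos)
  qed
  define \<epsilon> where "\<epsilon> = (\<lambda>e. if e = e0 then m - c else 0)"
  define \<epsilon>' where "\<epsilon>' = (\<lambda>e. if e = e1 then c' - m' else 0)"
  have pe1: "(\<lambda>e. min p (dual_p p q) + \<epsilon> e) = (\<lambda>e. if e = e0 then m else c)"
    unfolding \<epsilon>_def c_def d_def by (intro ext) simp
  have pe2: "(\<lambda>e. max p (dual_p p q) - \<epsilon>' e) = (\<lambda>e. if e = e1 then m' else c')"
    unfolding \<epsilon>'_def c'_def d_def by (intro ext) simp
  have fkm: "fk_measure V E \<alpha> p q A = Ws E w A / Ws E w UNIV" for A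
    unfolding w_def by (rule fk_Ws[OF fin])
  show ?thesis
  proof (intro exI conjI)
    show "\<forall>e\<in>E. 0 \<le> \<epsilon> e \<and> \<epsilon> e \<le> 1 \<and> 0 \<le> \<epsilon>' e \<and> \<epsilon>' e \<le> 1"
      unfolding \<epsilon>_def \<epsilon>'_def using m m' c01 by auto
    show "\<exists>e\<in>E. \<epsilon> e \<noteq> 0" using e0(1) m unfolding \<epsilon>_def by (intro bexI[of _ e0]) auto
    show "\<exists>e\<in>E. \<epsilon>' e \<noteq> 0" using e1(1) m' unfolding \<epsilon>'_def by (intro bexI[of _ e1]) auto
    show "\<forall>e\<in>E. min p (dual_p p q) + \<epsilon> e \<le> 1 \<and> 0 \<le> max p (dual_p p q) - \<epsilon>' e"
      using pe1 pe2 m m' c01 by (metis order_less_le_trans less_imp_le)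
    show "stoch_dom E (bern_measure E (\<lambda>e. min p (dual_p p q) + \<epsilon> e)) (fk_measure V E \<alpha> p q)"
      unfolding stoch_dom_def pe1 bern_Bs[OF fin] fkm
      using domL Wpos by (simp add: pos_le_divide_eq)
    show "stoch_dom E (fk_measure V E \<alpha> p q) (bern_measure E (\<lambda>e. max p (dual_p p q) - \<epsilon>' e))"
      unfolding stoch_dom_def pe2 bern_Bs[OF fin] fkm
      using domU Wpos by (simp add: pos_divide_le_eq)
  qed
qed

end
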